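(* For all $R\in(0,1)$ and all $Z_n=(z_1,\dots,z_n)\in U^n$, \[ \max_{|z|\le R}|B_q(Z_n,z)|\ge |q(0)|\prod_{j=1}^n\max\{R,|z_j|\}. \]
   Context: $U$ is the open unit disc and $E\subset U$ is a set with infinitely many points whose set $E_0$ of nontangential limit points has Lebesgue measure zero on $\partial U$ (a point $\zeta\in\partial U$ is a nontangential limit point of $E$ if some sequence $(w_n)$ in $E$ satisfies $w_n\to\zeta$ and $|w_n-\zeta|=O(1-|w_n|)$). The function $q$ is defined as follows: if $\overline E\cap\partial U=\emptyset$, $q\equiv1$; otherwise $q$ is a holomorphic function on $U$ with $0<|q(z)|<1$ on $U$ and $\lim_{z\in E,|z|\to1}q(z)=0$ (such a function exists by a theorem of Hayman), normalized so that $\sup_U|q|=1$. For $Z_n=(z_1,\dots,z_n)$, $B(Z_n,z)=\prod_{j=1}^n\frac{z-z_j}{1-\overline{z_j}z}$ and $B_q(Z_n,z)=B(Z_n,z)q(z)$. *)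

theory Defs
  imports "HOL-Complex_Analysis.Complex_Analysis"
begin

definition blaschke :: "nat \<Rightarrow> (nat \<Rightarrow> complex) \<Rightarrow> complex \<Rightarrow> complex" where
  "blaschke n zs z = (\<Prod>j=1..n. (z - zs j) / (1 - cnj (zs j) * z))"

definition nt_limit_point :: "complex set \<Rightarrow> complex \<Rightarrow> bool" where
  "nt_limit_point E \<zeta> \<longleftrightarrow> norm \<zeta> = 1 \<and>
     (\<exists>w :: nat \<Rightarrow> complex. (\<forall>n. w n \<in> E) \<and> w \<longlonglongrightarrow> \<zeta> \<and>
        (\<exists>C. \<forall>n. norm (w n - \<zeta>) \<le> C * (1 - norm (w n))))"

definition nt_limit_set :: "complex set \<Rightarrow> complex set" where
  "nt_limit_set E = {\<zeta>. nt_limit_point E \<zeta>}"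

definition circle_null :: "complex set \<Rightarrow> bool" where
  "circle_null A \<longleftrightarrow> {t \<in> {0..2*pi}. cis t \<in> A} \<in> null_sets lborel"

end

theory Submission
  imports Defs
begin

lemma hfac_holo:
  fixes a :: complex and R :: real
  assumes "norm a < 1" "0 < R"
  shows "(\<lambda>z. (complex_of_real (R^2) - cnj a * z) / (complex_of_real R * (1 - cnj a * z))) holomorphic_on ball 0 1"
    and "(\<lambda>z. (z - a) / (1 - cnj a * z)) holomorphic_on ball 0 1"
proof -
  have nz: "1 - cnj a * z \<noteq> 0" if "z \<in> ball 0 1" for z
  proof
    assume "1 - cnj a * z = 0"
    then have "cnj a * z = 1" by simp
    then have "norm a * norm z = 1" by (metis complex_mod_cnj norm_mult norm_one)
    moreover have "norm a * norm z < 1"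
    proof -
      have "norm z < 1" using that by simp
      have "norm a * norm z \<le> norm a" using \<open>norm z < 1\<close> by (simp add: mult_left_le)
      then show ?thesis using assms(1) by linarith
    qed
    ultimately show False by simp
  qed
  show "(\<lambda>z. (complex_of_real (R^2) - cnj a * z) / (complex_of_real R * (1 - cnj a * z))) holomorphic_on ball 0 1"
    using nz assms(2) by (intro holomorphic_intros) auto
  show "(\<lambda>z. (z - a) / (1 - cnj a * z)) holomorphic_on ball 0 1"
    using nz by (intro holomorphic_intros) auto
qed

lemma hfac_norm:
  fixes a z :: complex and R :: real
  assumes "norm z = R" "0 < R"
  shows "norm ((complex_of_real (R^2) - cnj a * z) / (complex_of_real R * (1 - cnj a * z)))
       = norm ((z - a) / (1 - cnj a * z))"
proof -
  have "complex_of_real (R^2) = z * cnj z"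
    using assms(1) by (metis complex_norm_square)
  then have "complex_of_real (R^2) - cnj a * z = z * cnj (z - a)" by (simp add: algebra_simps)
  then have "norm (complex_of_real (R^2) - cnj a * z) = R * norm (z - a)"
  proof -
    have "norm (cnj z - cnj a) = norm (z - a)" by (metis complex_cnj_diff complex_mod_cnj)
    then show ?thesis using assms \<open>complex_of_real (R^2) - cnj a * z = z * cnj (z - a)\<close>
      by (simp add: norm_mult)
  qed
  then show ?thesis using assms by (simp add: norm_divide norm_mult)
qed

theorem proposition3p2:
  fixes E :: "complex set" and q :: "complex \<Rightarrow> complex"
    and R :: real and n :: nat and zs :: "nat \<Rightarrow> complex"
  assumes E_sub: "E \<subseteq> ball 0 1"
    and E_inf: "infinite E"
    and E0_null: "circle_null (nt_limit_set E)"
    and q_triv: "closure E \<inter> sphere 0 1 = {} \<Longrightarrow> (\<forall>z\<in>ball 0 1. q z = 1)"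
    and q_nontriv: "closure E \<inter> sphere 0 1 \<noteq> {} \<Longrightarrow>
        q holomorphic_on ball 0 1 \<and>
        (\<forall>z\<in>ball 0 1. 0 < norm (q z) \<and> norm (q z) < 1) \<and>
        (\<forall>\<epsilon>>0. \<exists>r<1. \<forall>z\<in>E. r < norm z \<longrightarrow> norm (q z) < \<epsilon>) \<and>
        (SUP z\<in>ball 0 1. norm (q z)) = 1"
    and R: "0 < R" "R < 1"
    and zs: "\<forall>j\<in>{1..n}. zs j \<in> ball 0 1"
  shows "(SUP z\<in>cball 0 R. norm (blaschke n zs z * q z))
           \<ge> norm (q 0) * (\<Prod>j=1..n. max R (norm (zs j)))"
proof -
  have qh: "q holomorphic_on ball 0 1"
  proof (cases "closure E \<inter> sphere 0 1 = {}")
    case True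
    then have "\<forall>z\<in>ball 0 1. q z = 1" using q_triv by blast
    then show ?thesis
      using holomorphic_transform[of "\<lambda>_. 1" "ball 0 1" q] by (auto intro: holomorphic_intros)
  next
    case False then show ?thesis using q_nontriv by blast
  qed
  define h where "h j z = (if norm (zs j) < R
      then (complex_of_real (R^2) - cnj (zs j) * z) / (complex_of_real R * (1 - cnj (zs j) * z))
      else (z - zs j) / (1 - cnj (zs j) * z))" for j z
  define g where "g z = q z * (\<Prod>j=1..n. h j z)" for z
  define f where "f z = blaschke n zs z * q z" for z
  have hh: "h j holomorphic_on ball 0 1" if "j \<in> {1..n}" for j
    using hfac_holo[of "zs j" R] zs that R unfolding h_def by (cases "norm (zs j) < R") auto
  have gh: "g holomorphic_on ball 0 1"
    unfolding g_def using hh qh by (intro holomorphic_intros) auto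
  have fh: "f holomorphic_on ball 0 1"
  proof -
    have "(\<lambda>z. blaschke n zs z) holomorphic_on ball 0 1"
      unfolding blaschke_def
      by (rule holomorphic_on_prod) (use hfac_holo(2)[OF _ R(1)] zs in auto)
    then show ?thesis unfolding f_def using qh by (intro holomorphic_intros)
  qed
  have sub: "cball 0 R \<subseteq> ball 0 1" using R by auto
  have fc: "continuous_on (cball 0 R) f"
    using fh sub holomorphic_on_imp_continuous_on continuous_on_subset by blast
  have "continuous_on (cball 0 R) (\<lambda>z. norm (f z))"
    by (intro continuous_intros fc)
  then have "compact ((\<lambda>z. norm (f z)) ` cball 0 R)"
    by (intro compact_continuous_image) auto
  then have "bounded ((\<lambda>z. norm (f z)) ` cball 0 R)"
    by (rule compact_imp_bounded)
  then have bdd: "bdd_above ((\<lambda>z. norm (f z)) ` cball 0 R)"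
    by (simp add: bounded_imp_bdd_above)
  have gle: "norm (g 0) \<le> (SUP z\<in>cball 0 R. norm (f z))"
  proof (rule maximum_modulus_frontier[where f = g and S = "ball 0 R" and \<xi> = 0])
    show "g holomorphic_on interior (ball 0 R)" using gh R by (auto intro: holomorphic_on_subset)
    have cl: "closure (ball (0::complex) R) = cball 0 R" using R by simp
    show "continuous_on (closure (ball 0 R)) g" unfolding cl
      by (rule continuous_on_subset[OF holomorphic_on_imp_continuous_on[OF gh] sub])
    show "bounded (ball 0 R)" by simp
    show "0 \<in> ball 0 R" using R by simp
    fix z :: complex assume "z \<in> frontier (ball 0 R)"
    then have zR: "norm z = R" using R by simp
    have "norm (g z) = norm (f z)"
    proof -
      have "norm (h j z) = norm ((z - zs j) / (1 - cnj (zs j) * z))" for j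
        using hfac_norm[OF zR R(1)] unfolding h_def by simp
      then have "(\<Prod>j=1..n. norm (h j z)) = (\<Prod>j=1..n. norm ((z - zs j) / (1 - cnj (zs j) * z)))"
        by simp
      then show ?thesis
        unfolding g_def f_def blaschke_def norm_mult prod_norm by simp
    qed
    also have "\<dots> \<le> (SUP z\<in>cball 0 R. norm (f z))"
      using bdd zR by (intro cSUP_upper) auto
    finally show "norm (g z) \<le> (SUP z\<in>cball 0 R. norm (f z))" .
  qed
  have "norm (h j 0) = max R (norm (zs j))" for j
    using R by (auto simp: h_def norm_divide norm_mult power2_eq_square)
  then have "norm (g 0) = norm (q 0) * (\<Prod>j=1..n. max R (norm (zs j)))"
    unfolding g_def norm_mult by (simp only: prod_norm[symmetric])
  then show ?thesis using gle unfolding f_def by simp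
qed

end
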